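(* Let $F_i\colon \mathbb{R}^n \rightrightarrows \mathbb{R}^m$, $i=1,\ldots,p$, be nearly convex set-valued mappings and let $F=\bigcap_{i=1}^p F_i$, i.e. $F(x)=\bigcap_{i=1}^pF_i(x)$. Assume $$\bigcap_{i=1}^p \mathrm{ri}(\mathrm{gph}\, F_i)\neq\emptyset.$$ Then for any $\varepsilon \ge 0$, any $(\bar x, \bar y)\in \mathrm{gph}\, F$ and any $v\in\mathbb{R}^m$, $$D^*_\varepsilon F (\bar x, \bar y) (v)= \bigcup_{\substack{\varepsilon_1\geq 0,\ldots, \varepsilon_p\geq 0,\\ \varepsilon_1+\cdots+\varepsilon_p=\varepsilon}} \Big\{D^*_{\varepsilon_1} F_1 (\bar x, \bar y)(v_1)+\cdots+ D^*_{\varepsilon_p} F_p (\bar x, \bar y)(v_p) \;\Big|\; v_1+\cdots+v_p =v\Big\}.$$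
   Context: A set $D$ is nearly convex if there is a convex $E$ with $E\subset D\subset\overline{E}$. A set-valued mapping is nearly convex if its graph $\mathrm{gph}\,F=\{(x,y)\mid y\in F(x)\}$ is nearly convex. $\mathrm{ri}\,D=\{a\in D\mid\exists\delta>0,\ B(a;\delta)\cap\mathrm{aff}\,D\subset D\}$. For nonempty $\Omega$, $\bar z\in\Omega$, $\varepsilon\ge0$: $N_\varepsilon(\bar z;\Omega)=\{\xi\mid\langle\xi,z-\bar z\rangle\le\varepsilon\ \forall z\in\Omega\}$. The $\varepsilon$-coderivative at $(\bar x,\bar y)\in\mathrm{gph}\,F$ is $D^*_\varepsilon F(\bar x,\bar y)(v)=\{u\in\mathbb{R}^n\mid(u,-v)\in N_\varepsilon((\bar x,\bar y);\mathrm{gph}\,F)\}$. The union over the $v_i$ ranges over all $v_1,\dots,v_p\in\mathbb{R}^m$ summing to $v$; sums of sets are Minkowski sums. *)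

theory Defs
  imports "HOL-Analysis.Analysis"
begin

definition nearly_convex :: "'a::real_normed_vector set \<Rightarrow> bool" where
  "nearly_convex D \<longleftrightarrow> (\<exists>E. convex E \<and> E \<subseteq> D \<and> D \<subseteq> closure E)"

definition gph :: "('a \<Rightarrow> 'b set) \<Rightarrow> ('a \<times> 'b) set" where
  "gph F = {(x, y). y \<in> F x}"

definition nearly_convex_map :: "('a::real_normed_vector \<Rightarrow> 'b::real_normed_vector set) \<Rightarrow> bool" where
  "nearly_convex_map F \<longleftrightarrow> nearly_convex (gph F)"

definition ri :: "'a::real_normed_vector set \<Rightarrow> 'a set" where
  "ri D = {a \<in> D. \<exists>\<delta>>0. ball a \<delta> \<inter> affine hull D \<subseteq> D}"

definition eps_normal :: "real \<Rightarrow> 'a::real_inner \<Rightarrow> 'a set \<Rightarrow> 'a set" where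
  "eps_normal \<epsilon> zb \<Omega> = {\<xi>. \<forall>z\<in>\<Omega>. inner \<xi> (z - zb) \<le> \<epsilon>}"

definition eps_coderiv ::
  "real \<Rightarrow> ('a::real_inner \<Rightarrow> 'b::real_inner set) \<Rightarrow> 'a \<Rightarrow> 'b \<Rightarrow> 'b \<Rightarrow> 'a set" where
  "eps_coderiv \<epsilon> F xb yb v = {u. (u, - v) \<in> eps_normal \<epsilon> (xb, yb) (gph F)}"

end

theory Submission
  imports Defs
begin


lemma ri_const:
  fixes A :: "'a::euclidean_space set"
  assumes "convex A" "z0 \<in> rel_interior A" "a \<in> A" "\<forall>x\<in>A. inner \<eta> x \<le> inner \<eta> z0"
  shows "inner \<eta> a = inner \<eta> z0"
proof -
  have "a \<in> affine hull A" using assms(3) by (rule hull_inc)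
  then obtain e where e: "e > 1" "(1 - e) *\<^sub>R a + e *\<^sub>R z0 \<in> A"
    using convex_rel_interior_if2[OF assms(1,2)] by blast
  have "inner \<eta> ((1 - e) *\<^sub>R a + e *\<^sub>R z0) \<le> inner \<eta> z0" using e(2) assms(4) by blast
  then have h1: "(1 - e) * inner \<eta> a + e * inner \<eta> z0 \<le> inner \<eta> z0"
    by (simp only: inner_add_right inner_scaleR_right)
  have h2: "(e - 1) * (inner \<eta> z0 - inner \<eta> a) = (1 - e) * inner \<eta> a + e * inner \<eta> z0 - inner \<eta> z0"
    by (simp add: algebra_simps)
  have "\<not> (inner \<eta> z0 - inner \<eta> a > 0)"
  proof
    assume h: "inner \<eta> z0 - inner \<eta> a > 0"
    have "(e - 1) * (inner \<eta> z0 - inner \<eta> a) > 0" using e(1) h by (intro mult_pos_pos) auto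
    then show False using h1 h2 by linarith
  qed
  moreover have "inner \<eta> a \<le> inner \<eta> z0" using assms(3,4) by blast
  ultimately show ?thesis by linarith
qed

lemma convS_lemma:
  fixes A B :: "'a::euclidean_space set"
  assumes cA: "convex A" and cB: "convex B"
  shows "convex {(b - a, c - inner \<xi> b + t) | a b t. a \<in> A \<and> b \<in> B \<and> t > 0}" (is "convex ?S")
  unfolding convex_def
proof (intro ballI allI impI)
  fix x y and u v :: real
  assume x: "x \<in> ?S" and y: "y \<in> ?S" and uv: "0 \<le> u" "0 \<le> v" "u + v = 1"
  obtain a1 b1 t1 where 1: "x = (b1 - a1, c - inner \<xi> b1 + t1)" "a1 \<in> A" "b1 \<in> B" "t1 > 0"
    using x by blast
  obtain a2 b2 t2 where 2: "y = (b2 - a2, c - inner \<xi> b2 + t2)" "a2 \<in> A" "b2 \<in> B" "t2 > 0"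
    using y by blast
  have a: "u *\<^sub>R a1 + v *\<^sub>R a2 \<in> A" using cA 1 2 uv unfolding convex_def by blast
  have b: "u *\<^sub>R b1 + v *\<^sub>R b2 \<in> B" using cB 1 2 uv unfolding convex_def by blast
  have t: "u * t1 + v * t2 > 0"
  proof (cases "u = 0")
    case True then show ?thesis using uv 2 by simp
  next
    case False then have "u * t1 > 0" using uv 1 by simp
    moreover have "v * t2 \<ge> 0" using uv 2 by simp
    ultimately show ?thesis by linarith
  qed
  have sn0: "u * (c - inner \<xi> b1 + t1) + v * (c - inner \<xi> b2 + t2)
      = (u + v) * c - (u * inner \<xi> b1 + v * inner \<xi> b2) + (u * t1 + v * t2)"
    by (simp add: algebra_simps)
  have sn: "u * (c - inner \<xi> b1 + t1) + v * (c - inner \<xi> b2 + t2)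
      = c - inner \<xi> (u *\<^sub>R b1 + v *\<^sub>R b2) + (u * t1 + v * t2)"
    unfolding sn0 uv(3) by (simp add: inner_add_right)
  have fs: "u *\<^sub>R (b1 - a1) + v *\<^sub>R (b2 - a2) = (u *\<^sub>R b1 + v *\<^sub>R b2) - (u *\<^sub>R a1 + v *\<^sub>R a2)"
    by (simp add: algebra_simps)
  have eq: "u *\<^sub>R x + v *\<^sub>R y = ((u *\<^sub>R b1 + v *\<^sub>R b2) - (u *\<^sub>R a1 + v *\<^sub>R a2),
          c - inner \<xi> (u *\<^sub>R b1 + v *\<^sub>R b2) + (u * t1 + v * t2))"
    unfolding 1(1) 2(1) scaleR_Pair add_Pair real_scaleR_def fs sn ..
  show "u *\<^sub>R x + v *\<^sub>R y \<in> ?S"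
    unfolding eq using a b t by blast
qed
lemma two_sets:
  fixes A B :: "'a::euclidean_space set"
  assumes cA: "convex A" and cB: "convex B"
    and zA: "z0 \<in> rel_interior A" and zB: "z0 \<in> rel_interior B"
    and H: "\<forall>z\<in>A \<inter> B. inner \<xi> z \<le> c"
  shows "\<exists>\<xi>1 \<xi>2 c1 c2. \<xi>1 + \<xi>2 = \<xi> \<and> c1 + c2 = c \<and> (\<forall>a\<in>A. inner \<xi>1 a \<le> c1) \<and> (\<forall>b\<in>B. inner \<xi>2 b \<le> c2)"
proof -
  have z0A: "z0 \<in> A" and z0B: "z0 \<in> B" using zA zB rel_interior_subset by auto
  define S where "S = {(b - a, c - inner \<xi> b + t) | a b t. a \<in> A \<and> b \<in> B \<and> t > 0}"
  have convS: "convex S" unfolding S_def using convS_lemma[OF cA cB] .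
  have "(z0 - z0, c - inner \<xi> z0 + 1) \<in> S" unfolding S_def using z0A z0B
    by (intro CollectI exI[of _ z0] exI[of _ 1]) simp
  then have neS: "S \<noteq> {}" by blast
  have zS: "0 \<notin> S"
  proof
    assume "0 \<in> S"
    then obtain a b t where "0 = (b - a, c - inner \<xi> b + t)" "a \<in> A" "b \<in> B" "t > 0"
      unfolding S_def by blast
    then have "b = a" "inner \<xi> b = c + t" by (auto simp: zero_prod_def)
    moreover have "inner \<xi> b \<le> c" using H \<open>a \<in> A\<close> \<open>b \<in> B\<close> \<open>b = a\<close> by blast
    ultimately show False using \<open>t > 0\<close> by linarith
  qed
  obtain w where w: "w \<in> span S" "w \<noteq> 0" "\<And>x. x \<in> S \<Longrightarrow> 0 \<le> w \<bullet> x"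
    by (rule separating_hyperplane_set_0_inspan[OF convS neS zS]) blast
  define \<eta> where "\<eta> = fst w"
  define \<mu> where "\<mu> = snd w"
  have wp: "w = (\<eta>, \<mu>)" by (simp add: \<eta>_def \<mu>_def)
  have key: "0 \<le> inner \<eta> (b - a) + \<mu> * (c - inner \<xi> b + t)" if "a \<in> A" "b \<in> B" "t > 0" for a b t
  proof -
    have "(b - a, c - inner \<xi> b + t) \<in> S" unfolding S_def using that
      by (intro CollectI exI[of _ a] exI[of _ b] exI[of _ t]) simp
    from w(3)[OF this] have "0 \<le> (\<eta>, \<mu>) \<bullet> (b - a, c - inner \<xi> b + t)" by (simp only: wp)
    then show ?thesis by (simp only: inner_Pair inner_real_def)
  qed
  have mu0: "\<mu> \<ge> 0"
  proof (rule ccontr)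
    assume "\<not> \<mu> \<ge> 0"
    define t where "t = \<bar>c - inner \<xi> z0\<bar> + 1"
    have "0 \<le> inner \<eta> (z0 - z0) + \<mu> * (c - inner \<xi> z0 + t)"
      using key[OF z0A z0B] t_def by simp
    moreover have "c - inner \<xi> z0 + t > 0" unfolding t_def by linarith
    moreover have "\<mu> * (c - inner \<xi> z0 + t) < 0"
      using \<open>\<not> \<mu> \<ge> 0\<close> \<open>c - inner \<xi> z0 + t > 0\<close> by (intro mult_neg_pos) auto
    ultimately show False by simp
  qed
  show ?thesis
  proof (cases "\<mu> = 0")
    case True
    have k0: "0 \<le> inner \<eta> (b - a)" if "a \<in> A" "b \<in> B" for a b
      using key[OF that, of 1] True by simp
    have eqA: "inner \<eta> a = inner \<eta> z0" if "a \<in> A" for a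
      using ri_const[OF cA zA that] k0[OF _ z0B] by (simp add: inner_diff_right)
    have eqB: "inner \<eta> b = inner \<eta> z0" if "b \<in> B" for b
    proof -
      have "inner (-\<eta>) b = inner (-\<eta>) z0"
        using ri_const[OF cB zB that, of "-\<eta>"] k0[OF z0A] by (simp add: inner_diff_right)
      then show ?thesis by simp
    qed
    have orth: "orthogonal w x" if "x \<in> S" for x
    proof -
      obtain a b t where x: "x = (b - a, c - inner \<xi> b + t)" and ab: "a \<in> A" "b \<in> B"
        using \<open>x \<in> S\<close> unfolding S_def by blast
      have "inner \<eta> (b - a) = 0" using eqA[OF ab(1)] eqB[OF ab(2)] by (simp add: inner_diff_right)
      moreover note wp
      ultimately show ?thesis using True x unfolding orthogonal_def by simp
    qed
    have "orthogonal w w" using orthogonal_to_span[OF w(1) orth] .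
    then show ?thesis using w(2) by (simp add: orthogonal_def)
  next
    case False
    then have mupos: "\<mu> > 0" using mu0 by simp
    define \<xi>1 where "\<xi>1 = (1 / \<mu>) *\<^sub>R \<eta>"
    have ineq: "inner \<xi>1 a + inner (\<xi> - \<xi>1) b \<le> c" if "a \<in> A" "b \<in> B" for a b
    proof (rule field_le_epsilon)
      fix t :: real assume "t > 0"
      from key[OF that this] have k: "0 \<le> (1/\<mu>) * (inner \<eta> (b - a) + \<mu> * (c - inner \<xi> b + t))"
        using mupos by (intro mult_nonneg_nonneg) auto
      have e1: "(1/\<mu>) * (inner \<eta> (b - a) + \<mu> * (c - inner \<xi> b + t)) = inner \<eta> (b - a) / \<mu> + (c - inner \<xi> b + t)"
        using mupos by (simp add: field_simps)
      have e2: "inner \<eta> (b - a) / \<mu> = inner \<xi>1 b - inner \<xi>1 a"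
        unfolding \<xi>1_def by (simp add: inner_diff_right diff_divide_distrib)
      have e3: "inner (\<xi> - \<xi>1) b = inner \<xi> b - inner \<xi>1 b" by (simp add: inner_diff_left)
      show "inner \<xi>1 a + inner (\<xi> - \<xi>1) b \<le> c + t"
        using k e1 e2 e3 by linarith
    qed
    define c1 where "c1 = Sup ((\<lambda>a. inner \<xi>1 a) ` A)"
    have bnd: "inner \<xi>1 a \<le> c - inner (\<xi> - \<xi>1) z0" if "a \<in> A" for a
      using ineq[OF that z0B] by linarith
    have bdd: "bdd_above ((\<lambda>a. inner \<xi>1 a) ` A)"
      unfolding bdd_above_def using bnd by blast
    have 1: "\<forall>a\<in>A. inner \<xi>1 a \<le> c1" unfolding c1_def using cSup_upper[OF imageI bdd] by blast
    have 2: "\<forall>b\<in>B. inner (\<xi> - \<xi>1) b \<le> c - c1"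
    proof
      fix b assume "b \<in> B"
      have bb: "inner \<xi>1 a \<le> c - inner (\<xi> - \<xi>1) b" if "a \<in> A" for a
        using ineq[OF that \<open>b \<in> B\<close>] by linarith
      have "c1 \<le> c - inner (\<xi> - \<xi>1) b" unfolding c1_def
        using z0A bb by (intro cSup_least) blast+
      then show "inner (\<xi> - \<xi>1) b \<le> c - c1" by simp
    qed
    have "\<xi>1 + (\<xi> - \<xi>1) = \<xi>" "c1 + (c - c1) = c" by simp_all
    then show ?thesis using 1 2 by blast
  qed
qed

lemma core:
  fixes E :: "nat \<Rightarrow> 'a::euclidean_space set"
  assumes "p \<ge> 1" "\<forall>i\<in>{1..p}. convex (E i)" "z0 \<in> (\<Inter>i\<in>{1..p}. rel_interior (E i))"
    "\<forall>z\<in>(\<Inter>i\<in>{1..p}. E i). inner \<xi> z \<le> c"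
  shows "\<exists>\<xi>s cs. (\<Sum>i\<in>{1..p}. \<xi>s i) = \<xi> \<and> (\<Sum>i\<in>{1..p}. cs i) = c \<and>
           (\<forall>i\<in>{1..p}. \<forall>z\<in>E i. inner (\<xi>s i) z \<le> cs i)"
  using assms
proof (induction p arbitrary: \<xi> c rule: nat_induct_at_least)
  case base
  then show ?case by (intro exI[of _ "\<lambda>_. \<xi>"] exI[of _ "\<lambda>_. c"]) simp
next
  case (Suc p)
  define A where "A = (\<Inter>i\<in>{1..p}. E i)"
  define B where "B = E (Suc p)"
  have ins: "{1..Suc p} = insert (Suc p) {1..p}" using Suc.hyps by (simp add: atLeastAtMostSuc_conv)
  have cA: "convex A" unfolding A_def using Suc.prems(1) ins by (intro convex_INT) auto
  have cB: "convex B" unfolding B_def using Suc.prems(1) by simp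
  have z0all: "z0 \<in> (\<Inter>i\<in>{1..p}. rel_interior (E i))" using Suc.prems(2) ins by auto
  have "rel_interior (\<Inter>(E ` {1..p})) = \<Inter>(rel_interior ` E ` {1..p})"
    using Suc.prems(1) ins z0all by (intro convex_rel_interior_finite_Inter) auto
  then have zA: "z0 \<in> rel_interior A" unfolding A_def using z0all by simp
  have zB: "z0 \<in> rel_interior B" unfolding B_def using Suc.prems(2) ins by auto
  have H: "\<forall>z\<in>A \<inter> B. inner \<xi> z \<le> c" using Suc.prems(3) ins unfolding A_def B_def by auto
  obtain \<xi>1 \<xi>2 c1 c2 where tw: "\<xi>1 + \<xi>2 = \<xi>" "c1 + c2 = c" "\<forall>a\<in>A. inner \<xi>1 a \<le> c1" "\<forall>b\<in>B. inner \<xi>2 b \<le> c2"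
    using two_sets[OF cA cB zA zB H] by blast
  obtain \<xi>s cs where ih: "(\<Sum>i\<in>{1..p}. \<xi>s i) = \<xi>1" "(\<Sum>i\<in>{1..p}. cs i) = c1"
       "\<forall>i\<in>{1..p}. \<forall>z\<in>E i. inner (\<xi>s i) z \<le> cs i"
    using Suc.IH[of \<xi>1 c1] Suc.prems(1) tw(3) z0all ins unfolding A_def by auto
  define \<xi>s' where "\<xi>s' = \<xi>s(Suc p := \<xi>2)"
  define cs' where "cs' = cs(Suc p := c2)"
  have "(\<Sum>i\<in>{1..p}. \<xi>s' i) = (\<Sum>i\<in>{1..p}. \<xi>s i)" by (rule sum.cong) (auto simp: \<xi>s'_def)
  then have s1: "(\<Sum>i\<in>{1..p}. \<xi>s' i) = \<xi>1" using ih(1) by simp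
  have "(\<Sum>i\<in>{1..p}. cs' i) = (\<Sum>i\<in>{1..p}. cs i)" by (rule sum.cong) (auto simp: cs'_def)
  then have s2: "(\<Sum>i\<in>{1..p}. cs' i) = c1" using ih(2) by simp
  show ?case
  proof (intro exI[of _ \<xi>s'] exI[of _ cs'] conjI)
    show "(\<Sum>i\<in>{1..Suc p}. \<xi>s' i) = \<xi>" using s1 tw(1) ins by (simp add: \<xi>s'_def add.commute)
    show "(\<Sum>i\<in>{1..Suc p}. cs' i) = c" using s2 tw(2) ins by (simp add: cs'_def add.commute)
    show "\<forall>i\<in>{1..Suc p}. \<forall>z\<in>E i. inner (\<xi>s' i) z \<le> cs' i"
      using ih(3) tw(4) ins unfolding \<xi>s'_def cs'_def B_def by auto
  qed
qed

lemma ri_eq: "ri D = rel_interior D"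
  unfolding ri_def by (simp add: set_eq_iff mem_rel_interior_ball)

theorem mainTheorem7:
  fixes F :: "nat \<Rightarrow> real ^ 'n \<Rightarrow> (real ^ 'm) set"
    and p :: nat and \<epsilon> :: real
    and xb :: "real ^ 'n" and yb :: "real ^ 'm" and v :: "real ^ 'm"
  assumes "p \<ge> 1"
    and "\<forall>i\<in>{1..p}. nearly_convex_map (F i)"
    and "(\<Inter>i\<in>{1..p}. ri (gph (F i))) \<noteq> {}"
    and "\<epsilon> \<ge> 0"
    and "(xb, yb) \<in> gph (\<lambda>x. \<Inter>i\<in>{1..p}. F i x)"
  shows "eps_coderiv \<epsilon> (\<lambda>x. \<Inter>i\<in>{1..p}. F i x) xb yb v =
    (\<Union>e \<in> {e :: nat \<Rightarrow> real. (\<forall>i\<in>{1..p}. e i \<ge> 0) \<and> (\<Sum>i\<in>{1..p}. e i) = \<epsilon>}.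
       \<Union>vs \<in> {vs :: nat \<Rightarrow> real ^ 'm. (\<Sum>i\<in>{1..p}. vs i) = v}.
         {(\<Sum>i\<in>{1..p}. u i) | u. \<forall>i\<in>{1..p}. u i \<in> eps_coderiv (e i) (F i) xb yb (vs i)})"
proof -
  define zb where "zb = (xb, yb)"
  have gphF: "gph (\<lambda>x. \<Inter>i\<in>{1..p}. F i x) = (\<Inter>i\<in>{1..p}. gph (F i))"
    by (auto simp: gph_def)
  have zbi: "zb \<in> gph (F i)" if "i \<in> {1..p}" for i
    using assms(5) that unfolding gphF zb_def by auto
  have ex: "\<forall>i\<in>{1..p}. \<exists>E. convex E \<and> E \<subseteq> gph (F i) \<and> gph (F i) \<subseteq> closure E"
    using assms(2) unfolding nearly_convex_map_def nearly_convex_def by blast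
  obtain E where E0: "\<forall>i\<in>{1..p}. convex (E i) \<and> E i \<subseteq> gph (F i) \<and> gph (F i) \<subseteq> closure (E i)"
    using bchoice[OF ex] by blast
  have E: "\<And>i. i \<in> {1..p} \<Longrightarrow> convex (E i) \<and> E i \<subseteq> gph (F i) \<and> gph (F i) \<subseteq> closure (E i)"
    using E0 by blast
  have riE: "rel_interior (gph (F i)) \<subseteq> rel_interior (E i)" if "i \<in> {1..p}" for i
  proof -
    have c: "convex (E i)" and s1: "E i \<subseteq> gph (F i)" and s2: "gph (F i) \<subseteq> closure (E i)"
      using E[OF that] by auto
    have "affine hull (gph (F i)) = affine hull (closure (E i))"
    proof
      show "affine hull gph (F i) \<subseteq> affine hull closure (E i)" using s2 by (rule hull_mono)
      have "affine hull (E i) \<subseteq> affine hull (gph (F i))" using s1 by (rule hull_mono)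
      then show "affine hull closure (E i) \<subseteq> affine hull gph (F i)" by simp
    qed
    then have "rel_interior (gph (F i)) \<subseteq> rel_interior (closure (E i))"
      using s2 by (intro subset_rel_interior) auto
    then show ?thesis using convex_rel_interior_closure[OF c] by simp
  qed
  obtain z0 where z0: "z0 \<in> (\<Inter>i\<in>{1..p}. ri (gph (F i)))" using assms(3) by blast
  have z0E: "z0 \<in> (\<Inter>i\<in>{1..p}. rel_interior (E i))" using z0 riE unfolding ri_eq by blast
  show ?thesis
  proof (rule set_eqI, rule iffI)
    fix u assume "u \<in> eps_coderiv \<epsilon> (\<lambda>x. \<Inter>i\<in>{1..p}. F i x) xb yb v"
    then have hu: "\<forall>z\<in>(\<Inter>i\<in>{1..p}. gph (F i)). inner (u, - v) (z - zb) \<le> \<epsilon>"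
      unfolding eps_coderiv_def eps_normal_def gphF zb_def by simp
    define \<xi> where "\<xi> = (u, - v)"
    define c where "c = \<epsilon> + inner \<xi> zb"
    have H: "\<forall>z\<in>(\<Inter>i\<in>{1..p}. E i). inner \<xi> z \<le> c"
    proof
      fix z assume "z \<in> (\<Inter>i\<in>{1..p}. E i)"
      then have "z \<in> (\<Inter>i\<in>{1..p}. gph (F i))" using E by blast
      then have "inner \<xi> (z - zb) \<le> \<epsilon>" using hu unfolding \<xi>_def by blast
      then show "inner \<xi> z \<le> c" unfolding c_def by (simp add: inner_diff_right)
    qed
    obtain \<xi>s cs where co: "(\<Sum>i\<in>{1..p}. \<xi>s i) = \<xi>" "(\<Sum>i\<in>{1..p}. cs i) = c"
        "\<forall>i\<in>{1..p}. \<forall>z\<in>E i. inner (\<xi>s i) z \<le> cs i"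
      using core[OF assms(1) _ z0E H] E by blast
    have cl: "inner (\<xi>s i) z \<le> cs i" if "i \<in> {1..p}" "z \<in> gph (F i)" for i z
    proof -
      have "closure (E i) \<subseteq> {z. inner (\<xi>s i) z \<le> cs i}"
        using co(3) that(1) by (intro closure_minimal) (auto simp: closed_halfspace_le)
      then show ?thesis using E[OF that(1)] that(2) by blast
    qed
    define e where "e i = cs i - inner (\<xi>s i) zb" for i
    define vs where "vs i = - snd (\<xi>s i)" for i
    define us where "us i = fst (\<xi>s i)" for i
    have e0: "\<forall>i\<in>{1..p}. e i \<ge> 0" using cl zbi unfolding e_def by auto
    have esum: "(\<Sum>i\<in>{1..p}. e i) = \<epsilon>"
      unfolding e_def sum_subtractf co(2) inner_sum_left[symmetric] co(1) c_def by simp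
    have vsum: "(\<Sum>i\<in>{1..p}. vs i) = v"
      unfolding vs_def sum_negf snd_sum[symmetric] co(1) \<xi>_def by simp
    have usum: "(\<Sum>i\<in>{1..p}. us i) = u"
      unfolding us_def fst_sum[symmetric] co(1) \<xi>_def by simp
    have mem: "\<forall>i\<in>{1..p}. us i \<in> eps_coderiv (e i) (F i) xb yb (vs i)"
    proof
      fix i assume i: "i \<in> {1..p}"
      have eq: "(us i, - vs i) = \<xi>s i" unfolding us_def vs_def by simp
      have "\<forall>z\<in>gph (F i). inner (\<xi>s i) (z - zb) \<le> e i"
        using cl[OF i] by (simp add: e_def inner_diff_right)
      then show "us i \<in> eps_coderiv (e i) (F i) xb yb (vs i)"
        unfolding eps_coderiv_def eps_normal_def mem_Collect_eq eq zb_def[symmetric] by blast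
    qed
    show "u \<in> (\<Union>e \<in> {e :: nat \<Rightarrow> real. (\<forall>i\<in>{1..p}. e i \<ge> 0) \<and> (\<Sum>i\<in>{1..p}. e i) = \<epsilon>}.
       \<Union>vs \<in> {vs :: nat \<Rightarrow> real ^ 'm. (\<Sum>i\<in>{1..p}. vs i) = v}.
         {(\<Sum>i\<in>{1..p}. u i) | u. \<forall>i\<in>{1..p}. u i \<in> eps_coderiv (e i) (F i) xb yb (vs i)})"
      using e0 esum vsum usum mem by blast
  next
    fix w assume "w \<in> (\<Union>e \<in> {e :: nat \<Rightarrow> real. (\<forall>i\<in>{1..p}. e i \<ge> 0) \<and> (\<Sum>i\<in>{1..p}. e i) = \<epsilon>}.
       \<Union>vs \<in> {vs :: nat \<Rightarrow> real ^ 'm. (\<Sum>i\<in>{1..p}. vs i) = v}.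
         {(\<Sum>i\<in>{1..p}. u i) | u. \<forall>i\<in>{1..p}. u i \<in> eps_coderiv (e i) (F i) xb yb (vs i)})"
    then obtain e vs u where esum: "(\<Sum>i\<in>{1..p}. e i) = \<epsilon>" and vsum: "(\<Sum>i\<in>{1..p}. vs i) = v"
      and w: "w = (\<Sum>i\<in>{1..p}. u i)" and mem: "\<forall>i\<in>{1..p}. u i \<in> eps_coderiv (e i) (F i) xb yb (vs i)"
      by blast
    have pair: "(w, - v) = (\<Sum>i\<in>{1..p}. (u i, - vs i))"
      by (rule prod_eqI) (simp_all add: fst_sum snd_sum w vsum[symmetric] sum_negf)
    have "inner (w, - v) (z - zb) \<le> \<epsilon>" if z: "z \<in> (\<Inter>i\<in>{1..p}. gph (F i))" for z
    proof -
      have "inner (w, - v) (z - zb) = (\<Sum>i\<in>{1..p}. inner (u i, - vs i) (z - zb))"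
        unfolding pair by (simp add: inner_sum_left)
      also have "\<dots> \<le> (\<Sum>i\<in>{1..p}. e i)"
      proof (rule sum_mono)
        fix i assume i: "i \<in> {1..p}"
        then show "inner (u i, - vs i) (z - zb) \<le> e i"
          using mem z unfolding eps_coderiv_def eps_normal_def zb_def by blast
      qed
      finally show ?thesis using esum by simp
    qed
    then show "w \<in> eps_coderiv \<epsilon> (\<lambda>x. \<Inter>i\<in>{1..p}. F i x) xb yb v"
      unfolding eps_coderiv_def eps_normal_def gphF zb_def by blast
  qed
qed

end
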